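(* For each integer $N>6$ there exists $r>0$ such that for every regular hyperbolic $N$-gon $P$ (in the hyperbolic plane $\mathbb{H}^2$ of curvature $-1$) of radius $<r$, any two intersecting diagonals of $P$, each of length at most $\lfloor (N-1)/6\rfloor$, have internal angle $>2\pi/3$.
   Context: The \emph{radius} of a regular polygon is the distance from its centre to any vertex. For a regular polygon $P$, a \emph{diagonal} is a geodesic segment connecting two (possibly consecutive) vertices of $P$. A \emph{segment} of $P$ is the smaller of the two pieces obtained by cutting $P$ along a diagonal (if the diagonal is an edge, the segment is that edge); the \emph{length} of a segment is the number of edges of $P$ it contains, and the \emph{length} of a diagonal is the length of the segment it subtends. If $P$ is an $N$-gon and $d_1,d_2$ are diagonals of length less than $N/2$ intersecting at a point $p$ (possibly a common endpoint), exactly one connected component of $P\setminus(d_1\cup d_2)$ contains the centre of $P$; the angle at $p$ between $d_1$ and $d_2$ lying in this component is the \emph{internal angle} between $d_1$ and $d_2$. *)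

theory Defs
  imports "HOL-Analysis.Analysis"
begin

text \<open>Hyperboloid model of the hyperbolic plane of curvature -1:
  H = {x in R^3 . <x,x> = -1, x_3 > 0} with the Minkowski form
  <x,y> = x1 y1 + x2 y2 - x3 y3.\<close>

definition mink :: "real^3 \<Rightarrow> real^3 \<Rightarrow> real" where
  "mink x y = x$1 * y$1 + x$2 * y$2 - x$3 * y$3"

definition hplane :: "(real^3) set" where
  "hplane = {x. mink x x = -1 \<and> x$3 > 0}"

definition hdist :: "real^3 \<Rightarrow> real^3 \<Rightarrow> real" where
  "hdist x y = arcosh (- mink x y)"

definition hyp_isometry :: "(real^3 \<Rightarrow> real^3) \<Rightarrow> bool" where
  "hyp_isometry f \<longleftrightarrow> f ` hplane = hplane \<and>
     (\<forall>x\<in>hplane. \<forall>y\<in>hplane. hdist (f x) (f y) = hdist x y)"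

text \<open>Hyperbolic convex hull of a finite set of points of H: the geodesic
  hull is H intersected with the cone over the Euclidean convex hull.
  For two points this is the geodesic segment.\<close>
definition hconv :: "(real^3) set \<Rightarrow> (real^3) set" where
  "hconv V = {z \<in> hplane. \<exists>l>0. l *\<^sub>R z \<in> convex hull V}"

definition hseg :: "real^3 \<Rightarrow> real^3 \<Rightarrow> (real^3) set" where
  "hseg a b = hconv {a, b}"

definition std_vertex :: "nat \<Rightarrow> real \<Rightarrow> nat \<Rightarrow> real^3" where
  "std_vertex N \<rho> k = vector [sinh \<rho> * cos (2 * pi * real k / real N),
                              sinh \<rho> * sin (2 * pi * real k / real N),
                              cosh \<rho>]"

definition hcentre0 :: "real^3" where
  "hcentre0 = vector [0, 0, 1]"

text \<open>A regular N-gon of radius \<rho> is the image of the standard one under an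
  isometry f; its vertices (cyclically labelled), region and centre:\<close>
definition rvertex :: "nat \<Rightarrow> real \<Rightarrow> (real^3 \<Rightarrow> real^3) \<Rightarrow> nat \<Rightarrow> real^3" where
  "rvertex N \<rho> f k = f (std_vertex N \<rho> (k mod N))"

definition rpolygon :: "nat \<Rightarrow> real \<Rightarrow> (real^3 \<Rightarrow> real^3) \<Rightarrow> (real^3) set" where
  "rpolygon N \<rho> f = hconv (rvertex N \<rho> f ` {..<N})"

definition rcentre :: "(real^3 \<Rightarrow> real^3) \<Rightarrow> real^3" where
  "rcentre f = f hcentre0"

text \<open>The diagonal from vertex i to vertex i+m (indices mod N); for
  1 \<le> m < N/2 it has length m.\<close>
definition rdiag :: "nat \<Rightarrow> real \<Rightarrow> (real^3 \<Rightarrow> real^3) \<Rightarrow> nat \<Rightarrow> nat \<Rightarrow> (real^3) set" where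
  "rdiag N \<rho> f i m = hseg (rvertex N \<rho> f i) (rvertex N \<rho> f (i + m))"

definition unit_tangent :: "real^3 \<Rightarrow> real^3 \<Rightarrow> bool" where
  "unit_tangent p w \<longleftrightarrow> mink p w = 0 \<and> mink w w = 1"

definition hexp :: "real^3 \<Rightarrow> real^3 \<Rightarrow> real \<Rightarrow> real^3" where
  "hexp p w t = cosh t *\<^sub>R p + sinh t *\<^sub>R w"

definition ray_dir :: "(real^3) set \<Rightarrow> real^3 \<Rightarrow> real^3 \<Rightarrow> bool" where
  "ray_dir S p w \<longleftrightarrow> unit_tangent p w \<and> (\<exists>e>0. \<forall>t\<in>{0..e}. hexp p w t \<in> S)"

text \<open>\<theta> is the internal angle at p between d1 and d2 (w.r.t. region P with
  centre c): there are a ray of d1 at p (direction x) and a ray of d2 at p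
  (direction y) such that the angular sector swept from x to y, of measure
  \<theta>, lies (near p) in the connected component of P - (d1 \<union> d2)
  containing c.\<close>
definition internal_angle ::
  "(real^3) set \<Rightarrow> real^3 \<Rightarrow> (real^3) set \<Rightarrow> (real^3) set \<Rightarrow> real^3 \<Rightarrow> real \<Rightarrow> bool" where
  "internal_angle P c d1 d2 p \<theta> \<longleftrightarrow>
     0 < \<theta> \<and> \<theta> < 2 * pi \<and>
     (\<exists>x y z. ray_dir d1 p x \<and> ray_dir d2 p y \<and> unit_tangent p z \<and> mink x z = 0 \<and>
        y = cos \<theta> *\<^sub>R x + sin \<theta> *\<^sub>R z \<and>
        (\<forall>s\<in>{0<..<\<theta>}. \<exists>e>0. \<forall>t\<in>{0<..<e}.
           hexp p (cos s *\<^sub>R x + sin s *\<^sub>R z) t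
             \<in> connected_component_set (P - (d1 \<union> d2)) c))"

end

theory Submission
  imports Defs
begin

lemma vec3_eq: "(x::real^3) = y \<longleftrightarrow> x$1 = y$1 \<and> x$2 = y$2 \<and> x$3 = y$3"
  by (simp add: vec_eq_iff forall_3)

lemma mink_sym: "mink x y = mink y x" by (simp add: mink_def mult.commute)
lemma mink_add_right[simp]: "mink x (y + z) = mink x y + mink x z" by (simp add: mink_def algebra_simps)
lemma mink_add_left[simp]: "mink (y + z) x = mink y x + mink z x" by (simp add: mink_def algebra_simps)
lemma mink_diff_right[simp]: "mink x (y - z) = mink x y - mink x z" by (simp add: mink_def algebra_simps)
lemma mink_diff_left[simp]: "mink (y - z) x = mink y x - mink z x" by (simp add: mink_def algebra_simps)
lemma mink_scale_right[simp]: "mink x (a *\<^sub>R y) = a * mink x y" by (simp add: mink_def algebra_simps)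
lemma mink_scale_left[simp]: "mink (a *\<^sub>R y) x = a * mink y x" by (simp add: mink_def algebra_simps)
lemma mink_zero[simp]: "mink x 0 = 0" "mink 0 x = 0" by (simp_all add: mink_def)

lemma mink_inner: "mink n q = inner (vector [n$1, n$2, - n$3] :: real^3) q"
  by (simp add: mink_def inner_vec_def sum_3)

lemma mink_nondeg: assumes "\<And>u. mink w u = 0" shows "w = (0::real^3)"
proof -
  have "mink w (vector [1,0,0]) = 0" "mink w (vector [0,1,0]) = 0" "mink w (vector [0,0,1]) = 0"
    using assms by auto
  then show ?thesis by (simp add: mink_def vec3_eq)
qed

lemma cs2_aux: "(a^2+b^2+1)*(c^2+d^2+1) - (a*c+b*d+1)^2 = (a*d-b*c)^2+(a-c)^2+(b-d)^2" for a b c d :: real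
  by (simp add: power2_eq_square algebra_simps)

lemma rev_cs_real:
  fixes a b c x y z :: real
  assumes "a^2+b^2+1 = c^2" "0<c" "x^2+y^2+1 = z^2" "0<z"
  shows "a*x+b*y+1 \<le> c*z"
proof (rule power2_le_imp_le)
  have "(c*z)^2 = (a^2+b^2+1)*(x^2+y^2+1)" using assms by (simp add: power_mult_distrib)
  moreover have "(a^2+b^2+1)*(x^2+y^2+1) - (a*x+b*y+1)^2 = (a*y-b*x)^2+(a-x)^2+(b-y)^2"
    by (rule cs2_aux)
  moreover have "(a*y-b*x)^2+(a-x)^2+(b-y)^2 \<ge> 0" by simp
  ultimately show "(a*x+b*y+1)^2 \<le> (c*z)^2" by linarith
  show "0 \<le> c*z" using assms by simp
qed

lemma hplane_rev_cs:
  assumes "u \<in> hplane" "v \<in> hplane" shows "- mink u v \<ge> 1"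
proof -
  have "u$1 * u$1 + u$2 * u$2 - u$3 * u$3 = -1" "u$3 > 0" "v$1 * v$1 + v$2 * v$2 - v$3 * v$3 = -1" "v$3 > 0"
    using assms unfolding hplane_def mink_def by auto
  hence "u$1 * v$1 + u$2 * v$2 + 1 \<le> u$3 * v$3"
    by (intro rev_cs_real) (simp_all add: power2_eq_square)
  thus ?thesis by (simp add: mink_def)
qed
lemma hplane_mink: "u \<in> hplane \<Longrightarrow> mink u u = -1" by (simp add: hplane_def)

lemma iso_H: "hyp_isometry f \<Longrightarrow> u \<in> hplane \<Longrightarrow> f u \<in> hplane"
  unfolding hyp_isometry_def by blast

lemma iso_mink:
  assumes f: "hyp_isometry f" and u: "u \<in> hplane" and v: "v \<in> hplane"
  shows "mink (f u) (f v) = mink u v"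
proof -
  have fu: "f u \<in> hplane" "f v \<in> hplane" using iso_H[OF f] u v by auto
  have "hdist (f u) (f v) = hdist u v" using f u v unfolding hyp_isometry_def by blast
  hence "cosh (hdist (f u) (f v)) = cosh (hdist u v)" by (rule arg_cong)
  moreover have "cosh (hdist (f u) (f v)) = - mink (f u) (f v)"
    unfolding hdist_def by (rule cosh_arcosh_real) (rule hplane_rev_cs[OF fu])
  moreover have "cosh (hdist u v) = - mink u v"
    unfolding hdist_def by (rule cosh_arcosh_real) (rule hplane_rev_cs[OF u v])
  ultimately show ?thesis by linarith
qed

definition bb0 :: "real^3" where "bb0 = vector [0,0,1]"
definition bb1 :: "real^3" where "bb1 = vector [3/4,0,5/4]"
definition bb2 :: "real^3" where "bb2 = vector [0,3/4,5/4]"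
definition gg0 :: "real^3 \<Rightarrow> real" where "gg0 u = u$3 - 5/3 * (u$1 + u$2)"
definition gg1 :: "real^3 \<Rightarrow> real" where "gg1 u = 4/3 * u$1"
definition gg2 :: "real^3 \<Rightarrow> real" where "gg2 u = 4/3 * u$2"

lemma bb_H: "bb0 \<in> hplane" "bb1 \<in> hplane" "bb2 \<in> hplane"
  by (simp_all add: hplane_def mink_def bb0_def bb1_def bb2_def)

lemma bb_decomp: "u = gg0 u *\<^sub>R bb0 + gg1 u *\<^sub>R bb1 + gg2 u *\<^sub>R bb2"
  by (simp add: vec3_eq bb0_def bb1_def bb2_def gg0_def gg1_def gg2_def algebra_simps)

definition LA :: "(real^3 \<Rightarrow> real^3) \<Rightarrow> real^3 \<Rightarrow> real^3" where
  "LA f u = gg0 u *\<^sub>R f bb0 + gg1 u *\<^sub>R f bb1 + gg2 u *\<^sub>R f bb2"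

lemma gg_lin: "gg0 (x+y) = gg0 x + gg0 y" "gg1 (x+y) = gg1 x + gg1 y" "gg2 (x+y) = gg2 x + gg2 y"
  "gg0 (c *\<^sub>R x) = c * gg0 x" "gg1 (c *\<^sub>R x) = c * gg1 x" "gg2 (c *\<^sub>R x) = c * gg2 x"
  by (simp_all add: gg0_def gg1_def gg2_def algebra_simps)

lemma LA_linear: "linear (LA f)"
  by (rule linearI) (simp_all add: LA_def gg_lin scaleR_add_left scaleR_add_right)

lemma LA_mink:
  assumes f: "hyp_isometry f"
  shows "mink (LA f u) (LA f v) = mink u v"
proof -
  have m: "mink (f bb0) (f bb0) = mink bb0 bb0" "mink (f bb0) (f bb1) = mink bb0 bb1"
    "mink (f bb0) (f bb2) = mink bb0 bb2" "mink (f bb1) (f bb0) = mink bb1 bb0"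
    "mink (f bb1) (f bb1) = mink bb1 bb1" "mink (f bb1) (f bb2) = mink bb1 bb2"
    "mink (f bb2) (f bb0) = mink bb2 bb0" "mink (f bb2) (f bb1) = mink bb2 bb1"
    "mink (f bb2) (f bb2) = mink bb2 bb2"
    using iso_mink[OF f] bb_H by auto
  have "mink (LA f u) (LA f v) =
     mink (gg0 u *\<^sub>R bb0 + gg1 u *\<^sub>R bb1 + gg2 u *\<^sub>R bb2) (gg0 v *\<^sub>R bb0 + gg1 v *\<^sub>R bb1 + gg2 v *\<^sub>R bb2)"
    by (simp add: LA_def m)
  also have "\<dots> = mink u v" using bb_decomp[of u] bb_decomp[of v] by simp
  finally show ?thesis .
qed

lemma LA_bb: "LA f bb0 = f bb0" "LA f bb1 = f bb1" "LA f bb2 = f bb2"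
  by (simp_all add: LA_def gg0_def gg1_def gg2_def bb0_def bb1_def bb2_def)

lemma LA_inj: assumes f: "hyp_isometry f" shows "inj (LA f)"
proof (rule linear_injective_0[THEN iffD2, OF LA_linear], intro allI impI)
  fix u assume "LA f u = 0"
  hence "mink u v = 0" for v using LA_mink[OF f, of u v] by simp
  thus "u = 0" using mink_nondeg by blast
qed

lemma LA_surj: assumes f: "hyp_isometry f" shows "surj (LA f)"
  using LA_linear LA_inj[OF f] by (simp add: linear_injective_imp_surjective)

lemma LA_eq:
  assumes f: "hyp_isometry f" and v: "v \<in> hplane"
  shows "f v = LA f v"
proof -
  let ?w = "f v - LA f v"
  have "mink ?w (f bb) = 0" if "bb \<in> {bb0,bb1,bb2}" for bb
  proof -
    have "mink (f v) (f bb) = mink v bb" using iso_mink[OF f v] that bb_H by auto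
    moreover have "mink (LA f v) (f bb) = mink v bb" using LA_mink[OF f, of v bb] LA_bb that by auto
    ultimately show ?thesis by simp
  qed
  hence "mink ?w (LA f u) = 0" for u by (simp add: LA_def)
  hence "mink ?w z = 0" for z
  proof -
    obtain u where "z = LA f u" using LA_surj[OF f] by (metis surj_def)
    thus ?thesis using \<open>\<And>u. mink ?w (LA f u) = 0\<close> by simp
  qed
  hence "?w = 0" using mink_nondeg by blast
  thus ?thesis by simp
qed


lemma hull_mink_le:
  assumes "\<And>v. v \<in> V \<Longrightarrow> mink n v \<le> 0" "w \<in> convex hull V"
  shows "mink n w \<le> 0"
proof -
  have "convex hull V \<subseteq> {x. inner (vector [n$1, n$2, - n$3] :: real^3) x \<le> 0}"
    by (rule hull_minimal) (use assms(1) in \<open>auto simp: mink_inner convex_halfspace_le\<close>)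
  thus ?thesis using assms(2) by (auto simp: mink_inner)
qed

lemma hull_mink_gt:
  assumes "\<And>v. v \<in> V \<Longrightarrow> mink n v > 0" "w \<in> convex hull V"
  shows "mink n w > 0"
proof -
  have "convex hull V \<subseteq> {x. inner (vector [n$1, n$2, - n$3] :: real^3) x > 0}"
    by (rule hull_minimal) (use assms(1) in \<open>auto simp: mink_inner convex_halfspace_gt\<close>)
  thus ?thesis using assms(2) by (auto simp: mink_inner)
qed

lemma third_mink: "w$3 = mink (vector [0,0,-1]) w" by (simp add: mink_def)

lemma conv_pos: assumes "V \<subseteq> hplane" "w \<in> convex hull V" shows "w$3 > 0"
  using hull_mink_gt[of V "vector [0,0,-1]" w] assms unfolding third_mink[symmetric]
  by (auto simp: hplane_def third_mink[symmetric])

lemma hconv_transport: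
  assumes f: "hyp_isometry f" and V: "V \<subseteq> hplane"
  shows "hconv (f ` V) = LA f ` hconv V"
proof -
  have fV: "f ` V = LA f ` V" using LA_eq[OF f] V by (auto simp: image_def) (metis subsetD)+
  have ch: "convex hull (f ` V) = LA f ` (convex hull V)"
    unfolding fV by (rule convex_hull_linear_image[OF LA_linear, symmetric])
  have fVH: "f ` V \<subseteq> hplane" using iso_H[OF f] V by auto
  have lin: "LA f (a *\<^sub>R x) = a *\<^sub>R LA f x" for a x using LA_linear[of f] by (simp add: linear_scale)
  show ?thesis
  proof
    show "hconv (f ` V) \<subseteq> LA f ` hconv V"
    proof
      fix z assume "z \<in> hconv (f ` V)"
      then obtain l where z: "z \<in> hplane" "l > 0" "l *\<^sub>R z \<in> LA f ` (convex hull V)"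
        unfolding hconv_def ch by auto
      then obtain w where w: "w \<in> convex hull V" "l *\<^sub>R z = LA f w" by auto
      let ?z' = "(1/l) *\<^sub>R w"
      have e: "LA f ?z' = z"
      proof -
        have "LA f ?z' = (1/l) *\<^sub>R LA f w" by (rule lin)
        also have "\<dots> = (1/l) *\<^sub>R (l *\<^sub>R z)" using w(2) by simp
        also have "\<dots> = z" using z(2) by simp
        finally show ?thesis .
      qed
      have "mink ?z' ?z' = -1" using LA_mink[OF f, of ?z' ?z'] e z(1) by (simp add: hplane_def)
      moreover have "?z' $ 3 > 0" using conv_pos[OF V w(1)] z(2) by simp
      moreover have "l *\<^sub>R ?z' \<in> convex hull V" using w z(2) by simp
      ultimately have "?z' \<in> hconv V" unfolding hconv_def hplane_def using z(2) by blast
      thus "z \<in> LA f ` hconv V" using e by (metis imageI)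
    qed
    show "LA f ` hconv V \<subseteq> hconv (f ` V)"
    proof
      fix z assume "z \<in> LA f ` hconv V"
      then obtain z' l where z': "z = LA f z'" "z' \<in> hplane" "l > 0" "l *\<^sub>R z' \<in> convex hull V"
        unfolding hconv_def by auto
      have m: "l *\<^sub>R z \<in> convex hull (f ` V)" unfolding ch z'(1) lin[symmetric] using z'(4) by (rule imageI)
      have "(l *\<^sub>R z) $ 3 > 0" by (rule conv_pos[OF fVH m])
      hence "z $ 3 > 0" using z'(3) by (simp add: zero_less_mult_iff)
      moreover have "mink z z = -1" using LA_mink[OF f, of z' z'] z' by (simp add: hplane_def)
      ultimately show "z \<in> hconv (f ` V)" unfolding hconv_def hplane_def using m z'(3) by blast
    qed
  qed
qed


definition mcross :: "real^3 \<Rightarrow> real^3 \<Rightarrow> real^3" where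
  "mcross a b = vector [a$2*b$3 - a$3*b$2, a$3*b$1 - a$1*b$3, -(a$1*b$2 - a$2*b$1)]"

lemma ortho_id:
  fixes a1 a2 a3 b1 b2 b3 z1 z2 z3 G11 G12 G22 wa wb wk k1 k2 k3 :: real
  assumes "G11 = a1*a1+a2*a2-a3*a3" "G12 = a1*b1+a2*b2-a3*b3" "G22 = b1*b1+b2*b2-b3*b3"
    "wa = z1*a1+z2*a2-z3*a3" "wb = z1*b1+z2*b2-z3*b3"
    "k1 = a2*b3 - a3*b2" "k2 = a3*b1 - a1*b3" "k3 = -(a1*b2 - a2*b1)"
    "wk = z1*k1+z2*k2-z3*k3"
  shows "(G12*G12 - G11*G22)*z1 = -(G22*wa - G12*wb)*a1 - (G11*wb - G12*wa)*b1 + wk*k1"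
    "(G12*G12 - G11*G22)*z2 = -(G22*wa - G12*wb)*a2 - (G11*wb - G12*wa)*b2 + wk*k2"
    "(G12*G12 - G11*G22)*z3 = -(G22*wa - G12*wb)*a3 - (G11*wb - G12*wa)*b3 + wk*k3"
    "k1*k1+k2*k2-k3*k3 = G12*G12 - G11*G22"
    "k1*a1+k2*a2-k3*a3 = 0" "k1*b1+k2*b2-k3*b3 = 0"
  unfolding assms by algebra+

lemma ortho_expand:
  assumes "mink p p = -1" "mink p x = 0" "mink x x = 1"
  defines "k \<equiv> mcross p x"
  shows "v = (- mink v p) *\<^sub>R p + mink v x *\<^sub>R x + mink v k *\<^sub>R k"
    "mink k k = 1" "mink k p = 0" "mink k x = 0"
proof -
  note I = ortho_id[of "-1" "p$1" "p$2" "p$3" 0 "x$1" "x$2" "x$3" 1 "mink v p" "v$1" "v$2" "v$3" "mink v x"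
     "k$1" "k$2" "k$3" "mink v k"]
  have h: "-1 = p$1*p$1+p$2*p$2-p$3*p$3" "0 = p$1*x$1+p$2*x$2-p$3*x$3" "1 = x$1*x$1+x$2*x$2-x$3*x$3"
    "mink v p = v$1*p$1+v$2*p$2-v$3*p$3" "mink v x = v$1*x$1+v$2*x$2-v$3*x$3"
    "k$1 = p$2*x$3 - p$3*x$2" "k$2 = p$3*x$1 - p$1*x$3" "k$3 = -(p$1*x$2 - p$2*x$1)"
    "mink v k = v$1*k$1+v$2*k$2-v$3*k$3"
    using assms by (simp_all add: mink_def mcross_def)
  note J = I[OF h]
  show "v = (- mink v p) *\<^sub>R p + mink v x *\<^sub>R x + mink v k *\<^sub>R k"
    using J(1-3) by (simp add: vec3_eq)
  show "mink k k = 1" using J(4) by (simp add: mink_def)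
  show "mink k p = 0" using J(5) by (simp add: mink_def)
  show "mink k x = 0" using J(6) by (simp add: mink_def)
qed

lemma final_alg:
  fixes mu b' g' b g n11 n22 M12 :: real
  assumes "n11 = mu^2" "n22 = b'^2 + g'^2" "M12 = mu * g'" "mu * g > 0" "b' > 0"
    "b * b' + g * g' = 0" "b^2 + g^2 = 1" "M12 > 0" "4 * M12^2 > n11 * n22"
  shows "b < -1/2"
proof -
  have "mu \<noteq> 0" using assms(4) by auto
  hence mu: "mu^2 > 0" by simp
  have "4 * M12^2 = mu^2 * (4 * g'^2)" using assms(3) by (simp add: power_mult_distrib)
  hence "mu^2 * (4 * g'^2) > mu^2 * (b'^2 + g'^2)" using assms(1,2,9) by simp
  hence q: "4 * g'^2 > b'^2 + g'^2" using mu by (simp add: mult_less_cancel_left_pos)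
  have "(mu*g)*(mu*g') = mu^2 * (g*g')" by (simp add: power2_eq_square algebra_simps)
  moreover have "(mu*g)*(mu*g') > 0" using assms(3,4,8) by simp
  ultimately have "mu^2 * (g*g') > 0" by linarith
  hence gg: "g * g' > 0" using mu by (simp add: zero_less_mult_iff)
  hence "b * b' < 0" using assms(6) by linarith
  hence bneg: "b < 0" using assms(5) by (simp add: mult_less_0_iff)
  have bb: "b*b' = -(g*g')" using assms(6) by linarith
  have "b^2 * (b'^2 + g'^2) = (b*b')^2 + b^2 * g'^2" unfolding power2_eq_square by algebra
  also have "(b*b')^2 = (g*g')^2" unfolding bb by simp
  also have "(g*g')^2 + b^2 * g'^2 = g'^2 * (b^2 + g^2)" unfolding power2_eq_square by algebra
  finally have e: "b^2 * (b'^2 + g'^2) = g'^2" using assms(7) by simp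
  have pos: "b'^2 + g'^2 > 0" using assms(5) by (simp add: add_pos_nonneg)
  have "(4*b^2 - 1) * (b'^2 + g'^2) = 4 * g'^2 - (b'^2 + g'^2)" using e by (simp add: algebra_simps)
  hence "(4*b^2 - 1) * (b'^2 + g'^2) > 0" using q by linarith
  hence "4*b^2 - 1 > 0" using pos by (simp add: zero_less_mult_iff)
  hence "(1/2)^2 < (-b)^2" by (simp add: power2_eq_square)
  hence "1/2 < -b" by (rule power2_less_imp_less) (use bneg in linarith)
  thus ?thesis by simp
qed
lemma trig_ids:
  fixes cm sm cd sd :: real
  assumes "cm^2 + sm^2 = 1" "cd^2 + sd^2 = 1"
  shows "(cm * cd - sm * sd)^2 + (sm * cd + cm * sd)^2 = 1" "(cm * cd + sm * sd)^2 + (sm * cd - cm * sd)^2 = 1"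
    "(cm * cd + sm * sd) * (cm * cd - sm * sd) + (sm * cd - cm * sd) * (sm * cd + cm * sd) = cd^2 - sd^2"
  using assms unfolding power2_eq_square by algebra+

lemma seg_solve:
  fixes cm sm cd sd s h w1 w2 w3 :: real
  assumes c: "cm^2 + sm^2 = 1" "cd^2 + sd^2 = 1" and l: "-h * cm * w1 - h * sm * w2 + s * cd * w3 = 0"
  defines "A1 \<equiv> cm * cd + sm * sd" and "B1 \<equiv> sm * cd - cm * sd" and "A2 \<equiv> cm * cd - sm * sd" and "B2 \<equiv> sm * cd + cm * sd"
  shows "s * ((w1 * B2 - w2 * A2) * A1 + (A1 * w2 - B1 * w1) * A2) = w1 * (2 * s * sd * cd)"
    "s * ((w1 * B2 - w2 * A2) * B1 + (A1 * w2 - B1 * w1) * B2) = w2 * (2 * s * sd * cd)"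
    "h * ((w1 * B2 - w2 * A2) + (A1 * w2 - B1 * w1)) = w3 * (2 * s * sd * cd)"
  using c l unfolding A1_def B1_def A2_def B2_def power2_eq_square by algebra+

lemma seg_sign:
  fixes cm sm cd sd s h w1 w2 w3 al be :: real
  assumes c: "cm^2 + sm^2 = 1" "cd^2 + sd^2 = 1"
  defines "A1 \<equiv> cm * cd + sm * sd" and "B1 \<equiv> sm * cd - cm * sd" and "A2 \<equiv> cm * cd - sm * sd" and "B2 \<equiv> sm * cd + cm * sd"
  assumes w: "w1 = s * (al * A1 + be * A2)" "w2 = s * (al * B1 + be * B2)" "w3 = h * (al+be)"
  shows "s * w3 - h * (A2 * w1 + B2 * w2) = 2 * s * h * al * sd^2"
    "s * w3 - h * (A1 * w1 + B1 * w2) = 2 * s * h * be * sd^2"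
  using c unfolding w A1_def B1_def A2_def B2_def power2_eq_square by algebra+

lemma core_alg:
  fixes W T G1 G2 H1 H2 U c1 c2 s1 s2 :: real
  assumes "W \<le> T^2" "T > 0" "W = G1^2 + H1^2" "W = G2^2 + H2^2" "G1 = c1 * T" "G2 = c2 * T"
    "W * U = G1 * G2 + H1 * H2" "c1^2 + s1^2 = 1" "c2^2 + s2^2 = 1" "s1 \<ge> 0" "s2 \<ge> 0" "c1 > 0"
    "c1 * c2 - s1 * s2 \<ge> 0"
  shows "U \<ge> c1 * c2 - s1 * s2"
proof -
  have "H1^2 \<le> (s1 * T)^2"
  proof -
    have "H1^2 = W - c1^2 * T^2" using assms(3,5) by (simp add: power_mult_distrib)
    also have "\<dots> \<le> T^2 - c1^2 * T^2" using assms(1) by simp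
    also have "\<dots> = (1 - c1^2) * T^2" by (simp add: algebra_simps)
    also have "1 - c1^2 = s1^2" using assms(8) by simp
    also have "s1^2 * T^2 = (s1 * T)^2" by (simp add: power_mult_distrib)
    finally show ?thesis .
  qed
  hence h1: "\<bar>H1\<bar> \<le> s1 * T" using abs_le_square_iff[of H1 "s1 * T"] assms(2,10) by simp
  have "H2^2 \<le> (s2 * T)^2"
  proof -
    have "H2^2 = W - c2^2 * T^2" using assms(4,6) by (simp add: power_mult_distrib)
    also have "\<dots> \<le> T^2 - c2^2 * T^2" using assms(1) by simp
    also have "\<dots> = (1 - c2^2) * T^2" by (simp add: algebra_simps)
    also have "1 - c2^2 = s2^2" using assms(9) by simp
    also have "s2^2 * T^2 = (s2 * T)^2" by (simp add: power_mult_distrib)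
    finally show ?thesis .
  qed
  hence h2: "\<bar>H2\<bar> \<le> s2 * T" using abs_le_square_iff[of H2 "s2 * T"] assms(2,11) by simp
  have "\<bar>H1 * H2\<bar> \<le> (s1 * T) * (s2 * T)" unfolding abs_mult by (rule mult_mono[OF h1 h2]) (use assms(2,10) in auto)
  hence "H1 * H2 \<ge> -((s1 * T) * (s2 * T))" by linarith
  hence "W * U \<ge> (c1 * c2 - s1 * s2) * T^2" using assms(5-7) by (simp add: power2_eq_square algebra_simps)
  moreover have "(c1 * c2 - s1 * s2) * T^2 \<ge> (c1 * c2 - s1 * s2) * W" using assms(1,13) by (simp add: mult_left_mono)
  ultimately have "W * U \<ge> W * (c1 * c2 - s1 * s2)" by (simp add: mult.commute)
  moreover have "W > 0"
  proof -
    have "G1^2 > 0" using assms(2,5,12) by simp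
    thus ?thesis using assms(3) by (metis add_pos_nonneg zero_le_power2)
  qed
  ultimately show ?thesis by (simp add: mult_le_cancel_left_pos)
qed

lemma final_ineq:
  fixes h s U kap c1 c2 :: real
  assumes "h^2 = 1 + s^2" "U \<ge> kap" "kap > 1/2" "s^2 < kap - 1/2" "0 \<le> c1" "c1 \<le> 1" "0 \<le> c2" "c2 \<le> 1"
  shows "h^2 * U - s^2 * c1 * c2 > 0" "4 * (h^2 * U - s^2 * c1 * c2)^2 > (h^2 - s^2 * c1^2) * (h^2 - s^2 * c2^2)"
proof -
  have cc: "c1 * c2 \<le> 1" using assms(5-8) by (metis mult_le_one)
  have "s^2 * c1 * c2 \<le> s^2" using cc by (simp add: mult.assoc mult_left_le)
  moreover have "h^2 * U \<ge> h^2 * kap" using assms(2) by (simp add: mult_left_mono)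
  moreover have "h^2 * (kap - 1/2) > s^2"
  proof -
    have "h^2 * (kap - 1/2) = (kap - 1/2) + s^2 * (kap - 1/2)" using assms(1) by (simp add: algebra_simps)
    moreover have "s^2 * (kap-1/2) \<ge> 0" using assms(3) by simp
    ultimately show ?thesis using assms(4) by linarith
  qed
  ultimately have X: "h^2 * U - s^2 * c1 * c2 > h^2/2" by (simp add: algebra_simps)
  have hp: "h^2 \<ge> 1" using assms(1) by simp
  thus "h^2 * U - s^2 * c1 * c2 > 0" using X by linarith
  have f1: "0 \<le> h^2 - s^2 * c1^2" "h^2 - s^2 * c1^2 \<le> h^2" "0 \<le> h^2 - s^2 * c2^2" "h^2 - s^2 * c2^2 \<le> h^2"
  proof -
    have "c1^2 \<le> 1" "c2^2 \<le> 1" using assms(5-8) by (simp_all add: power_le_one)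
    hence "s^2 * c1^2 \<le> s^2" "s^2 * c2^2 \<le> s^2" by (simp_all add: mult_left_le)
    thus "0 \<le> h^2 - s^2 * c1^2" "h^2 - s^2 * c1^2 \<le> h^2" "0 \<le> h^2 - s^2 * c2^2" "h^2 - s^2 * c2^2 \<le> h^2"
      using assms(1) by simp_all
  qed
  have "(h^2 - s^2 * c1^2) * (h^2 - s^2 * c2^2) \<le> h^2 * h^2" using f1 by (intro mult_mono) auto
  also have "h^2 * h^2 < 4 * (h^2 * U - s^2 * c1 * c2)^2"
  proof -
    have "(h^2/2)^2 < (h^2 * U - s^2 * c1 * c2)^2" using X hp by (intro power_strict_mono) auto
    thus ?thesis by (simp add: power2_eq_square)
  qed
  finally show "4 * (h^2 * U - s^2 * c1 * c2)^2 > (h^2 - s^2 * c1^2) * (h^2 - s^2 * c2^2)" .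
qed


definition vv :: "real \<Rightarrow> real \<Rightarrow> real \<Rightarrow> real^3" where
  "vv s h th = vector [s * cos th, s * sin th, h]"
definition nu :: "real \<Rightarrow> real \<Rightarrow> real \<Rightarrow> real \<Rightarrow> real^3" where
  "nu s h m d = vector [-h * cos m, -h * sin m, - s * cos d]"

lemma std_vv: "std_vertex N \<rho> k = vv (sinh \<rho>) (cosh \<rho>) (2 * pi * real k/real N)"
  by (simp add: std_vertex_def vv_def)

lemma std_mod: assumes "N > 0" shows "std_vertex N \<rho> (k mod N) = std_vertex N \<rho> k"
proof -
  have "real k = real (k mod N) + real N * real (k div N)"
    by (metis mod_div_mult_eq of_nat_add of_nat_mult mult.commute)
  hence e: "2 * pi * real (k mod N)/real N = 2 * pi * real k/real N - 2 * real (k div N) * pi"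
    using assms by (simp add: field_simps)
  show ?thesis unfolding std_vv e vv_def by (simp add: cos_diff sin_diff)
qed

lemma vv_H: "h^2 = 1 + s^2 \<Longrightarrow> h > 0 \<Longrightarrow> vv s h th \<in> hplane"
proof -
  assume a: "h^2 = 1 + s^2" "h > 0"
  have p: "cos th * cos th + sin th * sin th = 1" using sin_cos_squared_add[of th] by (simp add: power2_eq_square)
  have "mink (vv s h th) (vv s h th) = -1"
    using p a(1) unfolding mink_def vv_def vector_3 power2_eq_square by algebra
  thus ?thesis using a by (simp add: hplane_def vv_def)
qed

lemma nu_vv: "mink (nu s h m d) (vv s h (m - d)) = 0" "mink (nu s h m d) (vv s h (m + d)) = 0"
proof -
  have p: "cos m * cos m + sin m * sin m = 1" using sin_cos_squared_add[of m] by (simp add: power2_eq_square)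
  show "mink (nu s h m d) (vv s h (m - d)) = 0"
    using p unfolding mink_def nu_def vv_def vector_3 cos_diff sin_diff by algebra
  show "mink (nu s h m d) (vv s h (m + d)) = 0"
    using p unfolding mink_def nu_def vv_def vector_3 cos_add sin_add by algebra
qed

lemma nu_c0: "mink (nu s h m d) hcentre0 = s * cos d"
  by (simp add: mink_def nu_def hcentre0_def)

lemma nu_nu: "mink (nu s h m1 d1) (nu s h m2 d2) = h^2 * (cos m1 * cos m2 + sin m1 * sin m2) - s^2 * cos d1 * cos d2"
  by (simp add: mink_def nu_def power2_eq_square algebra_simps)

lemma nu_nu_self: "mink (nu s h m d) (nu s h m d) = h^2 - s^2 * cos d ^2"
proof -
  have p: "cos m^2 + sin m^2 = 1" by simp
  show ?thesis unfolding nu_nu using p by (simp add: power2_eq_square algebra_simps)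
qed

lemma vert_half: assumes "s \<ge> 0" "h \<ge> 0" shows "mink (vector [h * cos ph, h * sin ph, s]) (vv s h th) \<le> 0"
proof -
  have "cos ph * cos th + sin ph * sin th \<le> 1" using cos_le_one[of "ph - th"] by (simp add: cos_diff)
  hence "h * s * (cos ph * cos th + sin ph * sin th) \<le> h * s" using assms by (simp add: mult_left_le)
  thus ?thesis by (simp add: mink_def vv_def algebra_simps)
qed


lemma seg_std:
  assumes s: "s > 0" "h > 0" and d: "sin d > 0" "cos d > 0"
    and ha: "mink (vector [h * cos (m - d), h * sin (m - d), s]) w \<le> 0"
    and hb: "mink (vector [h * cos (m + d), h * sin (m + d), s]) w \<le> 0"
    and l: "mink (nu s h m d) w = 0"
  shows "\<exists>al be. al \<ge> 0 \<and> be \<ge> 0 \<and> w = al *\<^sub>R vv s h (m - d) + be *\<^sub>R vv s h (m + d)"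
proof -
  define cm sm cq sq where "cm = cos m" "sm = sin m" "cq = cos d" "sq = sin d"
  have c: "cm^2 + sm^2 = 1" "cq^2 + sq^2 = 1" unfolding cm_sm_cq_sq_def by simp_all
  define A1 B1 A2 B2 where "A1 = cm * cq + sm * sq" "B1 = sm * cq - cm * sq" "A2 = cm * cq - sm * sq" "B2 = sm * cq + cm * sq"
  have tr: "cos (m - d) = A1" "sin (m - d) = B1" "cos (m + d) = A2" "sin (m + d) = B2"
    unfolding A1_B1_A2_B2_def cm_sm_cq_sq_def by (simp_all add: cos_diff sin_diff cos_add sin_add)
  define D where "D = 2 * s * sq * cq"
  have D: "D > 0" unfolding D_def cm_sm_cq_sq_def using s d by simp
  define al be where "al = (w$1 * B2 - w$2 * A2) / D" "be = (A1 * w$2 - B1 * w$1) / D"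
  have l': "-h * cm * w$1 - h * sm * w$2 + s * cq * w$3 = 0"
    using l unfolding mink_def nu_def cm_sm_cq_sq_def by simp
  note S = seg_solve[OF c l', folded A1_B1_A2_B2_def]
  have e1: "w$1 = s * (al * A1 + be * A2)"
  proof -
    have "s * (al * A1 + be * A2) = s * ((w$1 * B2 - w$2 * A2) * A1 + (A1 * w$2 - B1 * w$1) * A2) / D"
      unfolding al_be_def using D by (simp add: field_simps)
    also have "\<dots> = w$1" using D by (simp add: S(1)[folded D_def])
    finally show ?thesis by simp
  qed
  have e2: "w$2 = s * (al * B1 + be * B2)"
  proof -
    have "s * (al * B1 + be * B2) = s * ((w$1 * B2 - w$2 * A2) * B1 + (A1 * w$2 - B1 * w$1) * B2) / D"
      unfolding al_be_def using D by (simp add: field_simps)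
    also have "\<dots> = w$2" using D by (simp add: S(2)[folded D_def])
    finally show ?thesis by simp
  qed
  have e3: "w$3 = h * (al + be)"
  proof -
    have "h * (al + be) = h * ((w$1 * B2 - w$2 * A2) + (A1 * w$2 - B1 * w$1)) / D"
      unfolding al_be_def using D by (simp add: field_simps)
    also have "\<dots> = w$3" using D by (simp add: S(3)[folded D_def])
    finally show ?thesis by simp
  qed
  note G = seg_sign[OF c, folded A1_B1_A2_B2_def, OF e1 e2 e3]
  have "s * w$3 - h * (A2 * w$1 + B2 * w$2) \<ge> 0" using hb unfolding mink_def tr by (simp add: algebra_simps)
  hence "2 * s * h * al * sq^2 \<ge> 0" using G(1) by simp
  hence al0: "al \<ge> 0" using s d mult_pos_pos[OF s(2) s(1)] unfolding cm_sm_cq_sq_def by (simp add: zero_le_mult_iff)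
  have "s * w$3 - h * (A1 * w$1 + B1 * w$2) \<ge> 0" using ha unfolding mink_def tr by (simp add: algebra_simps)
  hence "2 * s * h * be * sq^2 \<ge> 0" using G(2) by simp
  hence be0: "be \<ge> 0" using s d mult_pos_pos[OF s(2) s(1)] unfolding cm_sm_cq_sq_def by (simp add: zero_le_mult_iff)
  have "w = al *\<^sub>R vv s h (m - d) + be *\<^sub>R vv s h (m + d)"
    unfolding vec3_eq vv_def tr using e1 e2 e3 by (simp add: algebra_simps)
  thus ?thesis using al0 be0 by blast
qed


lemma hconv_pt: assumes "q \<in> hconv V" obtains l where "q \<in> hplane" "l > 0" "l *\<^sub>R q \<in> convex hull V"
  using assms unfolding hconv_def by blast

lemma F1std:
  assumes s: "s > 0" "h > 0" "h^2 = 1 + s^2" and d: "sin d > 0" "cos d > 0"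
    and V: "V \<subseteq> range (vv s h)" and q: "q \<in> hconv V" and l0: "mink (nu s h m d) q = 0"
  shows "q \<in> hconv {vv s h (m - d), vv s h (m + d)}"
proof -
  obtain l where l: "q \<in> hplane" "l > 0" "l *\<^sub>R q \<in> convex hull V" using q by (rule hconv_pt)
  let ?w = "l *\<^sub>R q"
  have VH: "V \<subseteq> hplane" using V vv_H[OF s(3) s(2)] by auto
  have hs: "mink (vector [h * cos ph, h * sin ph, s]) ?w \<le> 0" for ph
    by (rule hull_mink_le[OF _ l(3)]) (use V vert_half s in auto)
  have "mink (nu s h m d) ?w = 0" using l0 by simp
  then obtain al be where ab: "al \<ge> 0" "be \<ge> 0" "?w = al *\<^sub>R vv s h (m - d) + be *\<^sub>R vv s h (m + d)"
    using seg_std[OF s(1,2) d hs hs] by blast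
  have "?w $ 3 > 0" by (rule conv_pos[OF VH l(3)])
  hence "h * (al + be) > 0" using ab(3) by (simp add: vv_def algebra_simps)
  hence ab0: "al + be > 0" using s(2) by (simp add: zero_less_mult_iff)
  have "(l / (al + be)) *\<^sub>R q = (al / (al + be)) *\<^sub>R vv s h (m - d) + (be / (al + be)) *\<^sub>R vv s h (m + d)"
  proof -
    have "(l / (al + be)) *\<^sub>R q = (1 / (al + be)) *\<^sub>R ?w" by simp
    also have "\<dots> = (al / (al + be)) *\<^sub>R vv s h (m - d) + (be / (al + be)) *\<^sub>R vv s h (m + d)"
      unfolding ab(3) by (simp add: scaleR_add_right)
    finally show ?thesis .
  qed
  moreover have "(al / (al + be)) + (be / (al + be)) = 1" using ab0 by (simp add: add_divide_distrib[symmetric])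
  ultimately have "(l / (al + be)) *\<^sub>R q \<in> convex hull {vv s h (m - d), vv s h (m + d)}"
    unfolding convex_hull_2 using ab ab0 by fastforce
  moreover have "l / (al + be) > 0" using l(2) ab0 by simp
  ultimately show ?thesis unfolding hconv_def using l(1) by blast
qed

lemma seg_disk:
  fixes ca sa cb sb u v :: real
  assumes "ca^2 + sa^2 = 1" "cb^2 + sb^2 = 1" "u \<ge> 0" "v \<ge> 0" "u + v = 1"
  shows "(u * ca + v * cb)^2 + (u * sa + v * sb)^2 \<le> 1"
proof -
  have e: "(u * ca + v * cb)^2 + (u * sa + v * sb)^2 = u^2 + v^2 + 2 * u * v * (ca * cb + sa * sb)"
    using assms(1,2) unfolding power2_eq_square by algebra
  have "(ca - cb)^2 + (sa - sb)^2 = 2 - 2 * (ca * cb + sa * sb)"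
    using assms(1,2) unfolding power2_eq_square by algebra
  moreover have "(ca - cb)^2 + (sa - sb)^2 \<ge> 0" by simp
  ultimately have "ca * cb + sa * sb \<le> 1" by (smt (verit))
  hence "2 * u * v * (ca * cb + sa * sb) \<le> 2 * u * v" using assms(3,4) by (simp add: mult_left_le)
  hence "(u * ca + v * cb)^2 + (u * sa + v * sb)^2 \<le> (u + v)^2" unfolding e by (simp add: power2_sum)
  thus ?thesis using assms(5) by simp
qed

lemma rot_ids:
  fixes h w1 w2 cm sm cm1 sm1 cm2 sm2 :: real
  shows "cm^2 + sm^2 = 1 \<Longrightarrow> h^2 * (w1^2 + w2^2) = (h * (cm * w1 + sm * w2))^2 + (h * (-sm * w1 + cm * w2))^2"
    "h^2 * (w1^2 + w2^2) * (cm1 * cm2 + sm1 * sm2) = (h * (cm1 * w1 + sm1 * w2)) * (h * (cm2 * w1 + sm2 * w2)) + (h * (-sm1 * w1 + cm1 * w2)) * (h * (-sm2 * w1 + cm2 * w2))"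
  unfolding power2_eq_square by algebra+

lemma core_vec:
  assumes s: "s > 0" "h > 0" and d: "sin d1 > 0" "cos d1 > 0" "sin d2 \<ge> 0" "cos (d1 + d2) \<ge> 0"
    and w: "w \<in> convex hull {vv s h (m1 - d1), vv s h (m1 + d1)}"
    and l1: "mink (nu s h m1 d1) w = 0" and l2: "mink (nu s h m2 d2) w = 0"
  shows "cos m1 * cos m2 + sin m1 * sin m2 \<ge> cos (d1 + d2)"
proof -
  obtain u v where uv: "u \<ge> 0" "v \<ge> 0" "u + v = 1" "w = u *\<^sub>R vv s h (m1 - d1) + v *\<^sub>R vv s h (m1 + d1)"
    using w unfolding convex_hull_2 by blast
  have w3: "w$3 = h" using uv by (simp add: vv_def algebra_simps flip: distrib_left)
  have "(u * cos (m1 - d1) + v * cos (m1 + d1))^2 + (u * sin (m1 - d1) + v * sin (m1 + d1))^2 \<le> 1"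
    by (rule seg_disk) (use uv in auto)
  moreover have "w$1 = s * (u * cos (m1 - d1) + v * cos (m1 + d1))" "w$2 = s * (u * sin (m1 - d1) + v * sin (m1 + d1))"
    using uv by (simp_all add: vv_def algebra_simps)
  ultimately have "w$1^2 + w$2^2 \<le> s^2" by (simp add: power_mult_distrib flip: distrib_left) (metis mult_left_le zero_le_power2 mult.commute)
  hence W: "h^2 * (w$1^2 + w$2^2) \<le> (s * w$3)^2" unfolding w3 using s by (simp add: power_mult_distrib mult_left_mono mult.commute)
  have g1: "h * (cos m1 * w$1 + sin m1 * w$2) = cos d1 * (s * w$3)"
    using l1 by (simp add: mink_def nu_def algebra_simps)
  have g2: "h * (cos m2 * w$1 + sin m2 * w$2) = cos d2 * (s * w$3)"
    using l2 by (simp add: mink_def nu_def algebra_simps)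
  have "cos m1 * cos m2 + sin m1 * sin m2 \<ge> cos d1 * cos d2 - sin d1 * sin d2"
  proof (rule core_alg[OF W _ rot_ids(1) rot_ids(1) g1 g2 rot_ids(2)])
    show "0 < s * w$3" using s w3 by simp
    show "cos d1 ^2 + sin d1 ^2 = 1" "cos d2 ^2 + sin d2 ^2 = 1" "cos m1 ^2 + sin m1 ^2 = 1" "cos m2 ^2 + sin m2 ^2 = 1" by simp_all
    show "0 \<le> sin d1" "0 \<le> sin d2" "0 < cos d1" using d by simp_all
    show "0 \<le> cos d1 * cos d2 - sin d1 * sin d2" using d(4) by (simp add: cos_add)
  qed
  thus ?thesis by (simp add: cos_add)
qed


lemma seg_nu:
  assumes "q \<in> hconv {vv s h (m - d), vv s h (m + d)}"
  shows "mink (nu s h m d) q = 0"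
proof -
  obtain l where l: "q \<in> hplane" "l > 0" "l *\<^sub>R q \<in> convex hull {vv s h (m - d), vv s h (m + d)}"
    using assms by (rule hconv_pt)
  then obtain u v where uv: "l *\<^sub>R q = u *\<^sub>R vv s h (m - d) + v *\<^sub>R vv s h (m + d)"
    unfolding convex_hull_2 by blast
  have "l * mink (nu s h m d) q = 0"
    using arg_cong[OF uv, of "mink (nu s h m d)"] by (simp add: nu_vv)
  thus ?thesis using l(2) by simp
qed

lemma comp_sign:
  assumes q: "q \<in> connected_component_set S c" and nz: "\<And>z. z \<in> S \<Longrightarrow> mink n z \<noteq> 0"
    and c: "mink n c > 0"
  shows "mink n q > 0"
proof (rule ccontr)
  assume "\<not> mink n q > 0"
  hence qn: "inner (vector [n$1, n$2, - n$3] :: real^3) q \<le> 0" by (simp add: mink_inner)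
  have cS: "c \<in> connected_component_set S c"
    using q by (metis connected_component_eq_empty connected_component_refl_eq empty_iff mem_Collect_eq)
  have "0 \<le> inner (vector [n$1, n$2, - n$3] :: real^3) c" using c by (simp add: mink_inner)
  then obtain z where "z \<in> connected_component_set S c" "inner (vector [n$1, n$2, - n$3] :: real^3) z = 0"
    using connected_ivt_hyperplane[OF connected_connected_component q cS qn] by blast
  moreover hence "z \<in> S" using connected_component_subset by blast
  ultimately show False using nz by (simp add: mink_inner)
qed

lemma hexp_mink: "mink n (hexp p w t) = cosh t * mink n p + sinh t * mink n w"
  by (simp add: hexp_def)


lemma hh: "cosh \<rho> ^2 = 1 + sinh \<rho> ^2" for \<rho> :: real using cosh_square_eq[of \<rho>] by simp

lemma std_in_H: "std_vertex N \<rho> k \<in> hplane"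
  unfolding std_vv by (rule vv_H[OF hh]) simp

lemma rdiag_eq:
  assumes f: "hyp_isometry f" and N: "N > 0"
  shows "rdiag N \<rho> f i m = LA f ` hconv {vv (sinh \<rho>) (cosh \<rho>) ((2*pi*real i/real N + pi*real m/real N) - pi*real m/real N),
                                       vv (sinh \<rho>) (cosh \<rho>) ((2*pi*real i/real N + pi*real m/real N) + pi*real m/real N)}"
proof -
  have e1: "(2*pi*real i/real N + pi*real m/real N) - pi*real m/real N = 2*pi*real i/real N" by simp
  have e2: "(2*pi*real i/real N + pi*real m/real N) + pi*real m/real N = 2*pi*real (i+m)/real N"
    using N by (simp add: field_simps)
  have "rdiag N \<rho> f i m = hconv (f ` {std_vertex N \<rho> i, std_vertex N \<rho> (i+m)})"
    unfolding rdiag_def hseg_def rvertex_def std_mod[OF N] by simp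
  also have "\<dots> = LA f ` hconv {std_vertex N \<rho> i, std_vertex N \<rho> (i+m)}"
    by (rule hconv_transport[OF f]) (simp add: std_in_H)
  finally show ?thesis unfolding e1 e2 std_vv .
qed

lemma rpoly_eq:
  assumes f: "hyp_isometry f" and N: "N > 0"
  shows "rpolygon N \<rho> f = LA f ` hconv (std_vertex N \<rho> ` {..<N})"
proof -
  have "rvertex N \<rho> f ` {..<N} = f ` (std_vertex N \<rho> ` {..<N})"
    unfolding rvertex_def by (auto simp: image_iff)
  thus ?thesis unfolding rpolygon_def by (simp add: hconv_transport[OF f] std_in_H image_subset_iff)
qed


lemma main_fixed:
  fixes N :: nat and \<rho> :: real
  assumes f: "hyp_isometry f" and N: "N > 0" and rho: "\<rho> > 0"
    and kap: "kap > 1/2" "sinh \<rho> ^2 < kap - 1/2"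
    and dd: "sin (pi*real m1/real N) > 0" "cos (pi*real m1/real N) > 0"
       "sin (pi*real m2/real N) > 0" "cos (pi*real m2/real N) > 0"
       "cos (pi*real m1/real N + pi*real m2/real N) \<ge> kap"
    and p: "p \<in> rdiag N \<rho> f i1 m1 \<inter> rdiag N \<rho> f i2 m2"
    and ia: "internal_angle (rpolygon N \<rho> f) (rcentre f) (rdiag N \<rho> f i1 m1) (rdiag N \<rho> f i2 m2) p \<theta>"
  shows "\<theta> > 2 * pi / 3"
proof (rule ccontr)
  assume "\<not> \<theta> > 2*pi/3"
  hence th3: "\<theta> \<le> 2*pi/3" by simp
  define sh ch where "sh = sinh \<rho>" "ch = cosh \<rho>"
  have sh0: "sh > 0" and ch0: "ch > 0" and hsq: "ch^2 = 1 + sh^2" unfolding sh_ch_def using rho hh by auto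
  define d1 d2 where "d1 = pi*real m1/real N" "d2 = pi*real m2/real N"
  define mu1 mu2 where "mu1 = 2*pi*real i1/real N + d1" "mu2 = 2*pi*real i2/real N + d2"
  define a1 b1 a2 b2 where "a1 = vv sh ch (mu1 - d1)" "b1 = vv sh ch (mu1 + d1)"
    "a2 = vv sh ch (mu2 - d2)" "b2 = vv sh ch (mu2 + d2)"
  define D1 D2 P c where "D1 = rdiag N \<rho> f i1 m1" "D2 = rdiag N \<rho> f i2 m2" "P = rpolygon N \<rho> f" "c = rcentre f"
  define Vs where "Vs = std_vertex N \<rho> ` {..<N}"
  have D1: "D1 = LA f ` hconv {a1, b1}" unfolding D1_D2_P_c_def a1_b1_a2_b2_def mu1_mu2_def d1_d2_def sh_ch_def
    by (rule rdiag_eq[OF f N])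
  have D2: "D2 = LA f ` hconv {a2, b2}" unfolding D1_D2_P_c_def a1_b1_a2_b2_def mu1_mu2_def d1_d2_def sh_ch_def
    by (rule rdiag_eq[OF f N])
  have P: "P = LA f ` hconv Vs" unfolding D1_D2_P_c_def Vs_def by (rule rpoly_eq[OF f N])
  have Vs: "Vs \<subseteq> range (vv sh ch)" unfolding Vs_def sh_ch_def std_vv by auto
  have c: "c = LA f hcentre0" unfolding D1_D2_P_c_def rcentre_def
    by (rule LA_eq[OF f]) (simp add: hcentre0_def hplane_def mink_def)
  define n1 n2 where "n1 = nu sh ch mu1 d1" "n2 = nu sh ch mu2 d2"
  define N1 N2 where "N1 = LA f n1" "N2 = LA f n2"
  note LAm = LA_mink[OF f]
  have d1p: "sin d1 > 0" "cos d1 > 0" and d2p: "sin d2 > 0" "cos d2 > 0" and dk: "cos (d1 + d2) \<ge> kap"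
    using dd unfolding d1_d2_def by auto
  have onD1: "mink N1 q = 0" if qD: "q \<in> D1" for q
  proof -
    obtain q' where "q = LA f q'" "q' \<in> hconv {a1, b1}" using qD D1 by auto
    thus ?thesis unfolding N1_N2_def n1_n2_def a1_b1_a2_b2_def using LAm seg_nu by simp
  qed
  have onD2: "mink N2 q = 0" if qD: "q \<in> D2" for q
  proof -
    obtain q' where "q = LA f q'" "q' \<in> hconv {a2, b2}" using qD D2 by auto
    thus ?thesis unfolding N1_N2_def n1_n2_def a1_b1_a2_b2_def using LAm seg_nu by simp
  qed
  have offD1: "q \<in> D1" if qP: "q \<in> P" "mink N1 q = 0" for q
  proof -
    obtain q' where q': "q = LA f q'" "q' \<in> hconv Vs" using qP(1) P by auto
    have "mink n1 q' = 0" using qP(2) q'(1) LAm unfolding N1_N2_def by simp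
    hence "q' \<in> hconv {a1, b1}" unfolding a1_b1_a2_b2_def n1_n2_def
      by (intro F1std[OF sh0 ch0 hsq d1p Vs q'(2)])
    thus ?thesis using q'(1) D1 by simp
  qed
  have offD2: "q \<in> D2" if qP: "q \<in> P" "mink N2 q = 0" for q
  proof -
    obtain q' where q': "q = LA f q'" "q' \<in> hconv Vs" using qP(1) P by auto
    have "mink n2 q' = 0" using qP(2) q'(1) LAm unfolding N1_N2_def by simp
    hence "q' \<in> hconv {a2, b2}" unfolding a1_b1_a2_b2_def n1_n2_def
      by (intro F1std[OF sh0 ch0 hsq d2p Vs q'(2)])
    thus ?thesis using q'(1) D2 by simp
  qed
  have c1: "mink N1 c > 0" unfolding c N1_N2_def LAm n1_n2_def nu_c0 using sh0 d1p by simp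
  have c2: "mink N2 c > 0" unfolding c N1_N2_def LAm n1_n2_def nu_c0 using sh0 d2p by simp
  define K where "K = connected_component_set (P - (D1 \<union> D2)) c"
  have K1: "mink N1 q > 0" if "q \<in> K" for q
    by (rule comp_sign[OF that[unfolded K_def] _ c1]) (use offD1 in auto)
  have K2: "mink N2 q > 0" if "q \<in> K" for q
    by (rule comp_sign[OF that[unfolded K_def] _ c2]) (use offD2 in auto)
  have pD1: "p \<in> D1" and pD2: "p \<in> D2" using p unfolding D1_D2_P_c_def by auto
  have pH: "p \<in> hplane" using pD1 unfolding D1_D2_P_c_def rdiag_def hseg_def hconv_def by auto
  have Np: "mink N1 p = 0" "mink N2 p = 0" using onD1[OF pD1] onD2[OF pD2] .
  define U where "U = cos mu1 * cos mu2 + sin mu1 * sin mu2"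
  have U: "U \<ge> kap"
  proof -
    obtain p1 where p1: "p = LA f p1" "p1 \<in> hconv {a1, b1}" using pD1 D1 by auto
    obtain p2 where p2: "p = LA f p2" "p2 \<in> hconv {a2, b2}" using pD2 D2 by auto
    have "p1 = p2" using p1(1) p2(1) LA_inj[OF f] by (simp add: inj_eq)
    obtain l where l: "p1 \<in> hplane" "l > 0" "l *\<^sub>R p1 \<in> convex hull {a1, b1}" using p1(2) by (rule hconv_pt)
    have z1: "mink n1 (l *\<^sub>R p1) = 0" using seg_nu[OF p1(2)[unfolded a1_b1_a2_b2_def]] unfolding n1_n2_def by simp
    have z2: "mink n2 (l *\<^sub>R p1) = 0" using seg_nu[OF p2(2)[unfolded a1_b1_a2_b2_def]] \<open>p1 = p2\<close> unfolding n1_n2_def by simp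
    have "cos (d1 + d2) \<ge> 0" using dk kap by simp
    hence "U \<ge> cos (d1 + d2)" unfolding U_def
      using core_vec[OF sh0 ch0 d1p less_imp_le[OF d2p(1)] _ l(3)[unfolded a1_b1_a2_b2_def]] z1 z2
      unfolding n1_n2_def by blast
    thus ?thesis using dk by simp
  qed
  have cd1: "0 \<le> cos d1" "cos d1 \<le> 1" "0 \<le> cos d2" "cos d2 \<le> 1" using d1p d2p by auto
  note FI = final_ineq[OF hsq U kap(1) kap(2)[folded sh_ch_def] cd1]
  have M12: "mink N1 N2 = ch^2 * U - sh^2 * cos d1 * cos d2" unfolding N1_N2_def LAm n1_n2_def nu_nu U_def ..
  have M11: "mink N1 N1 = ch^2 - sh^2 * cos d1 ^2" unfolding N1_N2_def LAm n1_n2_def nu_nu_self ..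
  have M22: "mink N2 N2 = ch^2 - sh^2 * cos d2 ^2" unfolding N1_N2_def LAm n1_n2_def nu_nu_self ..
  have th: "0 < \<theta>" "\<theta> < 2*pi" using ia unfolding internal_angle_def by auto
  obtain x y z where rx: "ray_dir D1 p x" and ry: "ray_dir D2 p y" and uz: "unit_tangent p z"
      and xz: "mink x z = 0" and yxz: "y = cos \<theta> *\<^sub>R x + sin \<theta> *\<^sub>R z"
      and sec: "\<forall>s\<in>{0<..<\<theta>}. \<exists>e>0. \<forall>t\<in>{0<..<e}. hexp p (cos s *\<^sub>R x + sin s *\<^sub>R z) t \<in> K"
    using ia unfolding internal_angle_def K_def D1_D2_P_c_def by blast
  have ux: "mink p x = 0" "mink x x = 1" using rx unfolding ray_dir_def unit_tangent_def by auto
  have uy: "mink p y = 0" "mink y y = 1" using ry unfolding ray_dir_def unit_tangent_def by auto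
  have L1x: "mink N1 x = 0"
  proof -
    obtain e where e: "e > 0" "\<forall>t\<in>{0..e}. hexp p x t \<in> D1" using rx unfolding ray_dir_def by blast
    have "mink N1 (hexp p x e) = 0" using e onD1 by auto
    hence "sinh e * mink N1 x = 0" unfolding hexp_mink Np by simp
    thus ?thesis using e(1) by simp
  qed
  have L2y: "mink N2 y = 0"
  proof -
    obtain e where e: "e > 0" "\<forall>t\<in>{0..e}. hexp p y t \<in> D2" using ry unfolding ray_dir_def by blast
    have "mink N2 (hexp p y e) = 0" using e onD2 by auto
    hence "sinh e * mink N2 y = 0" unfolding hexp_mink Np by simp
    thus ?thesis using e(1) by simp
  qed
  define s0 where "s0 = \<theta> / 2"
  have s0: "s0 \<in> {0<..<\<theta>}" using th unfolding s0_def by auto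
  define w where "w = cos s0 *\<^sub>R x + sin s0 *\<^sub>R z"
  have thpi: "\<theta> < pi" using th3 pi_gt_zero by linarith
  have sth: "sin \<theta> > 0" using th thpi by (simp add: sin_gt_zero)
  have ss0: "sin s0 > 0" using s0 thpi by (intro sin_gt_zero) auto
  have Lw: "mink N1 w > 0 \<and> mink N2 w > 0"
  proof -
    obtain e where e: "e > 0" "\<forall>t\<in>{0<..<e}. hexp p w t \<in> K" using sec s0 unfolding w_def by blast
    have "hexp p w (e/2) \<in> K" using e by auto
    hence "mink N1 (hexp p w (e/2)) > 0" "mink N2 (hexp p w (e/2)) > 0" using K1 K2 by auto
    hence "sinh (e/2) * mink N1 w > 0" "sinh (e/2) * mink N2 w > 0" unfolding hexp_mink Np by auto
    moreover have "sinh (e/2) > 0" using e by simp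
    ultimately show ?thesis by (simp add: zero_less_mult_iff)
  qed
  have L1z: "mink N1 z > 0" using Lw ss0 L1x unfolding w_def by (simp add: zero_less_mult_iff)
  have L1y: "mink N1 y > 0" using L1z sth L1x unfolding yxz by simp
  have L2x: "mink N2 x > 0"
  proof -
    have "sin \<theta> * mink N2 w - sin s0 * mink N2 y = mink N2 x * sin (\<theta> - s0)"
      unfolding w_def yxz by (simp add: sin_diff algebra_simps)
    hence "sin \<theta> * mink N2 w = mink N2 x * sin s0" using L2y unfolding s0_def by simp
    moreover have "sin \<theta> * mink N2 w > 0" using sth Lw by simp
    ultimately have "mink N2 x * sin s0 > 0" by simp
    thus ?thesis using ss0 by (simp add: zero_less_mult_iff)
  qed
  have pp: "mink p p = -1" using pH by (simp add: hplane_def)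
  define k where "k = mcross p x"
  note OE = ortho_expand[OF pp ux(1) ux(2), folded k_def]
  define mu b' g' b g where "mu = mink N1 k" "b' = mink N2 x" "g' = mink N2 k" "b = mink y x" "g = mink y k"
  have sym: "mink u v = mink v u" for u v by (rule mink_sym)
  have eN1: "N1 = mu *\<^sub>R k" using OE(1)[of N1] Np(1) L1x unfolding mu_b'_g'_b_g_def by simp
  have eN2: "N2 = b' *\<^sub>R x + g' *\<^sub>R k" using OE(1)[of N2] Np(2) unfolding mu_b'_g'_b_g_def by simp
  have ey: "y = b *\<^sub>R x + g *\<^sub>R k" using OE(1)[of y] uy(1) sym[of y p] unfolding mu_b'_g'_b_g_def by simp
  have kx: "mink x k = 0" using OE(4) sym by simp
  have r1: "mink N1 N1 = mu^2" unfolding eN1 using OE(2) by (simp add: power2_eq_square)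
  have r2: "mink N2 N2 = b'^2 + g'^2" unfolding eN2 using OE(2) OE(4) kx ux(2) by (simp add: power2_eq_square)
  have r3: "mink N1 N2 = mu * g'" unfolding eN1 eN2 using OE(2) OE(4) by simp
  have r4: "mink N1 y = mu * g" unfolding eN1 ey using OE(2) OE(4) by simp
  have r5: "mink N2 y = b * b' + g * g'" unfolding eN2 ey using OE(2) OE(4) kx ux(2) by (simp add: algebra_simps)
  have r6: "mink y y = b^2 + g^2" unfolding ey using OE(2) OE(4) kx ux(2) by (simp add: power2_eq_square algebra_simps)
  have "b < -1/2"
  proof (rule final_alg[OF r1 r2 r3])
    show "mu * g > 0" using L1y r4 by simp
    show "b' > 0" using L2x unfolding mu_b'_g'_b_g_def by simp
    show "b * b' + g * g' = 0" using L2y r5 by simp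
    show "b^2 + g^2 = 1" using uy(2) r6 by simp
    show "mink N1 N2 > 0" using FI(1) M12 by simp
    show "4 * (mink N1 N2)^2 > mink N1 N1 * mink N2 N2" using FI(2) M12 M11 M22 by simp
  qed
  moreover have "b = cos \<theta>" unfolding mu_b'_g'_b_g_def yxz using ux(2) xz sym[of z x] by simp
  moreover have "cos \<theta> \<ge> -1/2"
    using cos_monotone_0_pi_le[of \<theta> "2*pi/3"] th th3 cos_120 by simp
  ultimately show False by simp
qed


theorem proposition3p5:
  fixes N :: nat
  assumes "N > 6"
  shows "\<exists>r>0. \<forall>\<rho> f. 0 < \<rho> \<and> \<rho> < r \<and> hyp_isometry f \<longrightarrow>
           (\<forall>i1 m1 i2 m2 p \<theta>.
              1 \<le> m1 \<and> m1 \<le> (N - 1) div 6 \<and> 1 \<le> m2 \<and> m2 \<le> (N - 1) div 6 \<and>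
              rdiag N \<rho> f i1 m1 \<noteq> rdiag N \<rho> f i2 m2 \<and>
              p \<in> rdiag N \<rho> f i1 m1 \<inter> rdiag N \<rho> f i2 m2 \<and>
              internal_angle (rpolygon N \<rho> f) (rcentre f)
                 (rdiag N \<rho> f i1 m1) (rdiag N \<rho> f i2 m2) p \<theta>
              \<longrightarrow> \<theta> > 2 * pi / 3)"
proof -
  define K0 where "K0 = (N - 1) div 6"
  have N0: "N > 0" using assms by simp
  have "6 * K0 \<le> N - 1" unfolding K0_def by simp
  hence K6: "6 * real K0 < real N" using N0 by linarith
  define y0 where "y0 = 2*pi*real K0/real N"
  have y0: "0 \<le> y0" "y0 < pi/3"
  proof -
    show "0 \<le> y0" unfolding y0_def by simp
    have "2*pi*real K0 < pi/3 * real N" using K6 pi_gt_zero by (simp add: field_simps)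
    thus "y0 < pi/3" unfolding y0_def using N0 by (simp add: divide_less_eq)
  qed
  define kap where "kap = cos y0"
  have kap: "kap > 1/2" unfolding kap_def using cos_monotone_0_pi[of y0 "pi/3"] y0 cos_60 by simp
  define r where "r = arsinh (sqrt (kap - 1/2))"
  have sr: "sinh r = sqrt (kap - 1/2)" unfolding r_def by simp
  have r0: "r > 0" using kap sr sinh_real_pos_iff[of r] by simp
  show ?thesis
  proof (intro exI[of _ r] conjI allI impI)
    show "r > 0" by (rule r0)
    fix \<rho> f i1 m1 i2 m2 p \<theta>
    assume a: "0 < \<rho> \<and> \<rho> < r \<and> hyp_isometry f"
    assume b: "1 \<le> m1 \<and> m1 \<le> (N - 1) div 6 \<and> 1 \<le> m2 \<and> m2 \<le> (N - 1) div 6 \<and>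
              rdiag N \<rho> f i1 m1 \<noteq> rdiag N \<rho> f i2 m2 \<and>
              p \<in> rdiag N \<rho> f i1 m1 \<inter> rdiag N \<rho> f i2 m2 \<and>
              internal_angle (rpolygon N \<rho> f) (rcentre f)
                 (rdiag N \<rho> f i1 m1) (rdiag N \<rho> f i2 m2) p \<theta>"
    have "sinh \<rho> < sinh r" using a by simp
    moreover have "sinh \<rho> > 0" using a by simp
    ultimately have "sinh \<rho> ^2 < (sqrt (kap - 1/2))^2" unfolding sr by (intro power_strict_mono) auto
    hence sk: "sinh \<rho> ^2 < kap - 1/2" using kap by simp
    have dj: "0 < pi*real m/real N \<and> pi*real m/real N \<le> pi*real K0/real N" if "1 \<le> m" "m \<le> K0" for m
      using that N0 by (auto simp: divide_right_mono)
    have half: "pi*real K0/real N < pi/6"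
    proof -
      have "pi*real K0/real N = y0/2" unfolding y0_def by simp
      thus ?thesis using y0(2) by linarith
    qed
    have dd: "sin (pi*real m/real N) > 0 \<and> cos (pi*real m/real N) > 0" if "1 \<le> m" "m \<le> K0" for m
    proof -
      have "0 < pi*real m/real N" "pi*real m/real N < pi/6" using dj[OF that] half by linarith+
      moreover have "pi/6 < pi/2" "pi/6 < pi" using pi_gt_zero by linarith+
      ultimately show ?thesis by (intro conjI sin_gt_zero cos_gt_zero) linarith+
    qed
    have m1: "1 \<le> m1" "m1 \<le> K0" and m2: "1 \<le> m2" "m2 \<le> K0" using b unfolding K0_def by auto
    have dsum: "cos (pi*real m1/real N + pi*real m2/real N) \<ge> kap"
    proof -
      have "pi*real m1/real N + pi*real m2/real N \<le> y0" using dj[OF m1] dj[OF m2] unfolding y0_def by simp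
      thus ?thesis unfolding kap_def using cos_monotone_0_pi_le[of "pi*real m1/real N + pi*real m2/real N" y0]
        dj[OF m1] dj[OF m2] y0 by simp
    qed
    show "\<theta> > 2 * pi / 3"
      by (rule main_fixed[of f N \<rho> kap m1 m2 p i1 i2])
        (use a b N0 kap sk dd[OF m1] dd[OF m2] dsum in auto)
  qed
qed

end
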